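(* If $x\in\Gamma_s$, then for all $i,j,k,l$ in the same connected component of $G_x$ such that $x_{ij}>0$ and $x_{kl}>0$, we have $a_{ij}p_{ij}=a_{kl}p_{kl}$.
   Context: Let $G=(\mathbb{V},E)$ be a finite graph with adjacency $\sim$ and edge set $E$. Let $a_{ij}=a_{ji}\ge0$ ($>0$ only if $i\sim j$) and $p_{ij}=p_{ji}\in[0,1]$ ($=0$ if $i\not\sim j$), with some $a_{ij}p_{ij}>0$. Fix $h_1\in(0,1]$; $\Delta$ is the set of arrays $x=(x_{ij})$ with $x_{ij}=x_{ji}\ge0$, $x_{ij}=0$ if $i\not\sim j$, $\sum_{i,j}x_{ij}=1$, $\sum_{(i,j):a_{ij}p_{ij}>0}x_{ij}\ge h_1$; $x_i=\sum_jx_{ij}$. $\partial\Delta$: the $x\in\Delta$ for which some vertex $i$ having a neighbour $j$ with $a_{ij}p_{ij}>0$ has $\sum_{j:a_{ij}p_{ij}>0}x_{ij}=0$. $H(x)=\sum_{(i,j):x_{ij}>0}a_{ij}p_{ij}x_{ij}^2/(x_ix_j)$; $y_{ij}=a_{ij}p_{ij}x_{ij}/(x_ix_j)$ ($0$ if $a_{ij}p_{ij}=0$); $F(x)_{ij}=x_{ij}(y_{ij}-H(x))$ ($0$ if $x_{ij}=0$); $\Gamma=\{x\in\Delta:F(x)=0\}$, $\Gamma_0=\Gamma\cap(\Delta\setminus\partial\Delta)$. For $x\in\Gamma_0$, $J(x)$ is the Jacobian (indexed by pairs of edges) of $(x_e)_{e\in E}\mapsto(F_e(x))_{e\in E}$,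 with $x_{ij}=x_{ji}=x_e$ for $e=\{i,j\}$, $x_i=\sum_jx_{ij}$, the formulas for $H$ (terms with $a_{ij}p_{ij}>0$) and $F$ regarded as smooth functions of the unconstrained variables near $x$. $\Gamma_s$ is the set of $x\in\Gamma_0$ such that all eigenvalues of $J(x)$ have nonpositive real part (linearly stable equilibria). $G_x$ is the subgraph with vertex set $\mathbb{V}$ and $i,j$ adjacent iff $x_{ij}>0$. *)

theory Defs
  imports "HOL-Analysis.Analysis"
begin

definition edges :: "('v \<Rightarrow> 'v \<Rightarrow> bool) \<Rightarrow> 'v set set" where
  "edges adj = {{i, j} | i j. adj i j}"

definition vsum :: "('v::finite \<Rightarrow> 'v \<Rightarrow> real) \<Rightarrow> 'v \<Rightarrow> real" where
  "vsum x i = (\<Sum>j\<in>UNIV. x i j)"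

definition in_Delta ::
  "('v::finite \<Rightarrow> 'v \<Rightarrow> bool) \<Rightarrow> ('v \<Rightarrow> 'v \<Rightarrow> real) \<Rightarrow> ('v \<Rightarrow> 'v \<Rightarrow> real) \<Rightarrow> real
   \<Rightarrow> ('v \<Rightarrow> 'v \<Rightarrow> real) \<Rightarrow> bool" where
  "in_Delta adj a p h1 x \<longleftrightarrow>
     (\<forall>i j. x i j = x j i) \<and> (\<forall>i j. x i j \<ge> 0) \<and> (\<forall>i j. \<not> adj i j \<longrightarrow> x i j = 0) \<and>
     (\<Sum>i\<in>UNIV. \<Sum>j\<in>UNIV. x i j) = 1 \<and>
     (\<Sum>(i,j)\<in>{(i,j). a i j * p i j > 0}. x i j) \<ge> h1"

definition in_bdry ::
  "('v::finite \<Rightarrow> 'v \<Rightarrow> bool) \<Rightarrow> ('v \<Rightarrow> 'v \<Rightarrow> real) \<Rightarrow> ('v \<Rightarrow> 'v \<Rightarrow> real) \<Rightarrow> real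
   \<Rightarrow> ('v \<Rightarrow> 'v \<Rightarrow> real) \<Rightarrow> bool" where
  "in_bdry adj a p h1 x \<longleftrightarrow> in_Delta adj a p h1 x \<and>
     (\<exists>i. (\<exists>j. adj i j \<and> a i j * p i j > 0) \<and> (\<Sum>j\<in>{j. a i j * p i j > 0}. x i j) = 0)"

definition Hf :: "('v::finite \<Rightarrow> 'v \<Rightarrow> real) \<Rightarrow> ('v \<Rightarrow> 'v \<Rightarrow> real) \<Rightarrow> ('v \<Rightarrow> 'v \<Rightarrow> real) \<Rightarrow> real" where
  "Hf a p x = (\<Sum>(i,j)\<in>{(i,j). x i j > 0}. a i j * p i j * (x i j)^2 / (vsum x i * vsum x j))"

definition yf :: "('v::finite \<Rightarrow> 'v \<Rightarrow> real) \<Rightarrow> ('v \<Rightarrow> 'v \<Rightarrow> real) \<Rightarrow> ('v \<Rightarrow> 'v \<Rightarrow> real) \<Rightarrow> 'v \<Rightarrow> 'v \<Rightarrow> real" where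
  "yf a p x i j = (if a i j * p i j = 0 then 0 else a i j * p i j * x i j / (vsum x i * vsum x j))"

definition Ff :: "('v::finite \<Rightarrow> 'v \<Rightarrow> real) \<Rightarrow> ('v \<Rightarrow> 'v \<Rightarrow> real) \<Rightarrow> ('v \<Rightarrow> 'v \<Rightarrow> real) \<Rightarrow> 'v \<Rightarrow> 'v \<Rightarrow> real" where
  "Ff a p x i j = (if x i j = 0 then 0 else x i j * (yf a p x i j - Hf a p x))"

text \<open>Smooth formulas used for the Jacobian (H sums over pairs with a_ij p_ij > 0).\<close>

definition Hs :: "('v::finite \<Rightarrow> 'v \<Rightarrow> real) \<Rightarrow> ('v \<Rightarrow> 'v \<Rightarrow> real) \<Rightarrow> ('v \<Rightarrow> 'v \<Rightarrow> real) \<Rightarrow> real" where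
  "Hs a p x = (\<Sum>(i,j)\<in>{(i,j). a i j * p i j > 0}. a i j * p i j * (x i j)^2 / (vsum x i * vsum x j))"

definition Fs :: "('v::finite \<Rightarrow> 'v \<Rightarrow> real) \<Rightarrow> ('v \<Rightarrow> 'v \<Rightarrow> real) \<Rightarrow> ('v \<Rightarrow> 'v \<Rightarrow> real) \<Rightarrow> 'v \<Rightarrow> 'v \<Rightarrow> real" where
  "Fs a p x i j = x i j * (yf a p x i j - Hs a p x)"

definition pert :: "('v \<Rightarrow> 'v \<Rightarrow> real) \<Rightarrow> 'v set \<Rightarrow> real \<Rightarrow> 'v \<Rightarrow> 'v \<Rightarrow> real" where
  "pert x f t = (\<lambda>i j. x i j + (if {i, j} = f then t else 0))"

definition edge_rep :: "('v \<Rightarrow> 'v \<Rightarrow> bool) \<Rightarrow> 'v set \<Rightarrow> 'v \<times> 'v" where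
  "edge_rep adj e = (SOME (i, j). adj i j \<and> e = {i, j})"

text \<open>Jacobian entry J(x)_{e,f} = dF_e / dx_f.\<close>

definition Jac :: "('v::finite \<Rightarrow> 'v \<Rightarrow> bool) \<Rightarrow> ('v \<Rightarrow> 'v \<Rightarrow> real) \<Rightarrow> ('v \<Rightarrow> 'v \<Rightarrow> real)
   \<Rightarrow> ('v \<Rightarrow> 'v \<Rightarrow> real) \<Rightarrow> 'v set \<Rightarrow> 'v set \<Rightarrow> real" where
  "Jac adj a p x e f = deriv (\<lambda>t. Fs a p (pert x f t) (fst (edge_rep adj e)) (snd (edge_rep adj e))) 0"

definition is_eigenvalue :: "'e set \<Rightarrow> ('e \<Rightarrow> 'e \<Rightarrow> real) \<Rightarrow> complex \<Rightarrow> bool" where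
  "is_eigenvalue E M \<mu> \<longleftrightarrow>
     (\<exists>v :: 'e \<Rightarrow> complex. (\<exists>e\<in>E. v e \<noteq> 0) \<and>
        (\<forall>e\<in>E. (\<Sum>f\<in>E. complex_of_real (M e f) * v f) = \<mu> * v e))"

definition in_Gamma0 ::
  "('v::finite \<Rightarrow> 'v \<Rightarrow> bool) \<Rightarrow> ('v \<Rightarrow> 'v \<Rightarrow> real) \<Rightarrow> ('v \<Rightarrow> 'v \<Rightarrow> real) \<Rightarrow> real
   \<Rightarrow> ('v \<Rightarrow> 'v \<Rightarrow> real) \<Rightarrow> bool" where
  "in_Gamma0 adj a p h1 x \<longleftrightarrow> in_Delta adj a p h1 x \<and> (\<forall>i j. Ff a p x i j = 0)
     \<and> \<not> in_bdry adj a p h1 x"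

definition in_Gammas ::
  "('v::finite \<Rightarrow> 'v \<Rightarrow> bool) \<Rightarrow> ('v \<Rightarrow> 'v \<Rightarrow> real) \<Rightarrow> ('v \<Rightarrow> 'v \<Rightarrow> real) \<Rightarrow> real
   \<Rightarrow> ('v \<Rightarrow> 'v \<Rightarrow> real) \<Rightarrow> bool" where
  "in_Gammas adj a p h1 x \<longleftrightarrow> in_Gamma0 adj a p h1 x \<and>
     (\<forall>\<mu>. is_eigenvalue (edges adj) (Jac adj a p x) \<mu> \<longrightarrow> Re \<mu> \<le> 0)"

definition Gx_conn :: "('v \<Rightarrow> 'v \<Rightarrow> real) \<Rightarrow> 'v \<Rightarrow> 'v \<Rightarrow> bool" where
  "Gx_conn x = (\<lambda>u v. x u v > 0)\<^sup>*\<^sup>*"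

end

theory Submission
  imports Defs
begin


lemma dq1:
  fixes y al u be w ga :: real
  assumes "u \<noteq> 0" "w \<noteq> 0"
  shows "((\<lambda>t. (y + t*al)/((u+t*be)*(w+t*ga))) has_real_derivative
          (al*(u*w) - y*(be*w+u*ga))/(u*w)^2) (at 0)"
proof -
  have "((\<lambda>t. (y + t*al)/((u+t*be)*(w+t*ga))) has_real_derivative
     ((0 + (1*al+t0*0))*((u+0*be)*(w+0*ga)) - (y+0*al)*((0+(1*be+0*0))*(w+0*ga) + (u+0*be)*(0+(1*ga+0*0)))) /
       ((u+0*be)*(w+0*ga))^2) (at 0)" for t0
    using assms
    by (intro derivative_eq_intros) (auto simp: power2_eq_square)
  then show ?thesis by (simp add: algebra_simps)
qed

lemma dq2:
  fixes y al u be w ga :: real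
  assumes "u \<noteq> 0" "w \<noteq> 0"
  shows "((\<lambda>t. (y + t*al)^2/((u+t*be)*(w+t*ga))) has_real_derivative
          (2*y*al*(u*w) - y^2*(be*w+u*ga))/(u*w)^2) (at 0)"
proof -
  have "((\<lambda>t. (y + t*al)*(y+t*al)/((u+t*be)*(w+t*ga))) has_real_derivative
     (((0 + (1*al+t0*0))*(y+0*al) + (y+0*al)*(0 + (1*al+t0*0)))*((u+0*be)*(w+0*ga)) - ((y+0*al)*(y+0*al))*((0+(1*be+0*0))*(w+0*ga) + (u+0*be)*(0+(1*ga+0*0)))) /
       ((u+0*be)*(w+0*ga))^2) (at 0)" for t0
    using assms
    by (intro derivative_eq_intros) (auto simp: power2_eq_square)
  then show ?thesis by (simp add: algebra_simps power2_eq_square)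
qed

lemma dsum:
  fixes k l i :: "'v::finite"
  assumes "k \<noteq> l"
  shows "(\<Sum>b\<in>UNIV. if {i,b} = {k,l} then (1::real) else 0) = (if i = k \<or> i = l then 1 else 0)"
proof -
  have "(\<lambda>b. if {i,b} = {k,l} then (1::real) else 0) = (\<lambda>b. (if i = k then (if b = l then 1 else 0) else 0) + (if i = l then (if b = k then 1 else 0) else 0))"
    using assms by (auto simp: doubleton_eq_iff)
  then have "(\<Sum>b\<in>UNIV. if {i,b} = {k,l} then (1::real) else 0) = (\<Sum>b\<in>UNIV. (if i = k then (if b = l then 1 else 0) else 0) + (if i = l then (if b = k then 1 else 0) else 0))"
    by metis
  also have "\<dots> = (if i = k \<or> i = l then 1 else 0)"
    using assms by (simp only: sum.distrib) (auto simp: sum.delta sum.delta')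
  finally show ?thesis .
qed

lemma pert_eq: "pert x f t i j = x i j + t * (if {i,j} = f then 1 else 0)"
  by (simp add: pert_def)

lemma vsum_pert:
  assumes "k \<noteq> l"
  shows "vsum (pert x {k,l} t) i = vsum x i + t * (if i = k \<or> i = l then 1 else 0)"
proof -
  have "vsum (pert x {k,l} t) i = vsum x i + t * (\<Sum>b\<in>UNIV. if {i,b} = {k,l} then (1::real) else 0)"
    by (simp add: vsum_def pert_eq sum.distrib sum_distrib_left)
  then show ?thesis using dsum[OF assms] by simp
qed

locale L =
  fixes adj :: "'v::finite \<Rightarrow> 'v \<Rightarrow> bool" and a p x :: "'v \<Rightarrow> 'v \<Rightarrow> real" and H :: real
  assumes xsym: "\<And>i j. x i j = x j i" and xnn: "\<And>i j. x i j \<ge> 0"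
    and xadj: "\<And>i j. \<not> adj i j \<Longrightarrow> x i j = 0"
    and adj_irrefl: "\<And>i. \<not> adj i i"
    and csym: "\<And>i j. a i j * p i j = a j i * p j i" and cnn: "\<And>i j. a i j * p i j \<ge> 0"
    and cpos_vs: "\<And>i j. a i j * p i j > 0 \<Longrightarrow> vsum x i > 0"
    and Hpos: "H > 0" and HHf: "Hf a p x = H"
    and equil: "\<And>i j. x i j > 0 \<Longrightarrow> a i j * p i j > 0 \<and> a i j * p i j * x i j = H * vsum x i * vsum x j"
begin

lemma vsum_ge: "x i j \<le> vsum x i"
  unfolding vsum_def by (rule member_le_sum) (auto simp: xnn)

lemma xpos_vs: "x i j > 0 \<Longrightarrow> vsum x i > 0 \<and> vsum x j > 0"
  using vsum_ge[of i j] vsum_ge[of j i] xsym[of i j] by auto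

lemma x_ii: "x i i = 0" using xadj adj_irrefl by blast

lemma x_neq: "x i j > 0 \<Longrightarrow> i \<noteq> j" using x_ii by auto

lemma cpos_vs2: "a i j * p i j > 0 \<Longrightarrow> vsum x j > 0"
  using cpos_vs[of j i] csym[of i j] by simp

lemma Hs_eq: "Hs a p x = H"
proof -
  let ?f = "\<lambda>(i,j). a i j * p i j * (x i j)^2 / (vsum x i * vsum x j)"
  have "Hs a p x = sum ?f {(i,j). a i j * p i j > 0}" by (simp add: Hs_def)
  also have "\<dots> = sum ?f {(i,j). x i j > 0}"
  proof (rule sum.mono_neutral_right)
    show "{(i,j). x i j > 0} \<subseteq> {(i,j). a i j * p i j > 0}" using equil by auto
    show "\<forall>i\<in>{(i,j). a i j * p i j > 0} - {(i,j). x i j > 0}. ?f i = 0"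
      using xnn by (force simp: le_less)
  qed auto
  also have "\<dots> = H" using HHf by (simp add: Hf_def)
  finally show ?thesis .
qed

lemma Ival: "x k l > 0 \<Longrightarrow> {a',b} = {k,l} \<Longrightarrow> x a' b > 0"
  using xsym by (auto simp: doubleton_eq_iff)

lemma sumD: fixes k l :: 'v shows "k \<noteq> l \<Longrightarrow> (\<Sum>u\<in>UNIV. (if u = k \<or> u = l then 1 else (0::real))) = 2"
proof -
  assume kl: "k \<noteq> l"
  have "(\<lambda>u. if u = k \<or> u = l then 1 else (0::real)) = (\<lambda>u. (if u = k then 1 else 0) + (if u = l then 1 else 0))"
    using kl by auto
  then have "(\<Sum>u\<in>UNIV. (if u = k \<or> u = l then 1 else (0::real))) = (\<Sum>u\<in>UNIV. (if u = k then 1 else 0) + (if u = l then 1 else (0::real)))"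
    by metis
  also have "\<dots> = 2" by (simp only: sum.distrib) simp
  finally show ?thesis .
qed



lemma hs_deriv0:
  fixes k l :: 'v
  assumes kl: "x k l > 0"
  shows "(\<Sum>(u,v)\<in>{(u,v). a u v * p u v > 0}. a u v * p u v * ((2 * x u v * (if {u,v}={k,l} then 1 else 0) * (vsum x u * vsum x v) - (x u v)^2 * ((if u = k \<or> u = l then 1 else 0) * vsum x v + vsum x u * (if v = k \<or> v = l then 1 else 0)))/(vsum x u * vsum x v)^2)) = 0"
proof -
  define I where "I u v = (if {u,v}={k,l} then 1 else (0::real))" for u v
  define D where "D u = (if u = k \<or> u = l then 1 else (0::real))" for u
  define R where "R u v = H * (2 * I u v - x u v * D u / vsum x u - x u v * D v / vsum x v)" for u v
  define C where "C = {(u,v). a u v * p u v > 0}"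
  have knl: "k \<noteq> l" using x_neq kl by blast
  have I0: "x u v = 0 \<Longrightarrow> I u v = 0" for u v
    using Ival[OF kl, of u v] unfolding I_def by auto
  have termeq: "a u v * p u v * ((2 * x u v * I u v * (vsum x u * vsum x v) - (x u v)^2 * (D u * vsum x v + vsum x u * D v))/(vsum x u * vsum x v)^2) = R u v"
    if "(u,v) \<in> C" for u v
  proof -
    have c: "a u v * p u v > 0" using that C_def by auto
    have vu: "vsum x u > 0" and vv: "vsum x v > 0" using cpos_vs[OF c] cpos_vs2[OF c] by auto
    show ?thesis
    proof (cases "x u v > 0")
      case True
      have e: "a u v * p u v * x u v = H * vsum x u * vsum x v" using equil[OF True] by auto
      have "a u v * p u v * ((2 * x u v * I u v * (vsum x u * vsum x v) - (x u v)^2 * (D u * vsum x v + vsum x u * D v))/(vsum x u * vsum x v)^2)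
          = (a u v * p u v * x u v) * ((2 * I u v * (vsum x u * vsum x v) - (x u v) * (D u * vsum x v + vsum x u * D v))/(vsum x u * vsum x v)^2)"
        by (simp add: power2_eq_square algebra_simps)
      also have "\<dots> = R u v" unfolding e R_def using vu vv
        by (simp add: power2_eq_square field_simps)
      finally show ?thesis .
    next
      case False
      then have "x u v = 0" using xnn[of u v] by auto
      then show ?thesis using I0[of u v] by (simp add: R_def)
    qed
  qed
  have Rout: "(u,v) \<notin> C \<Longrightarrow> R u v = 0" for u v
  proof -
    assume "(u,v) \<notin> C"
    then have "\<not> x u v > 0" using equil[of u v] C_def by auto
    then have "x u v = 0" using xnn[of u v] by auto
    then show ?thesis using I0[of u v] by (simp add: R_def)
  qed
  have "(\<Sum>(u,v)\<in>C. a u v * p u v * ((2 * x u v * I u v * (vsum x u * vsum x v) - (x u v)^2 * (D u * vsum x v + vsum x u * D v))/(vsum x u * vsum x v)^2))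
      = (\<Sum>(u,v)\<in>C. R u v)"
    by (rule sum.cong[OF refl]) (clarify, rule termeq, assumption)
  also have "\<dots> = (\<Sum>(u,v)\<in>UNIV. R u v)"
    by (rule sum.mono_neutral_left) (auto simp: Rout)
  also have "\<dots> = (\<Sum>u\<in>UNIV. \<Sum>v\<in>UNIV. R u v)"
    by (simp only: sum.cartesian_product UNIV_Times_UNIV)
  also have "\<dots> = H * (2 * (\<Sum>u\<in>UNIV. \<Sum>v\<in>UNIV. I u v) - (\<Sum>u\<in>UNIV. \<Sum>v\<in>UNIV. x u v * D u / vsum x u)
        - (\<Sum>u\<in>UNIV. \<Sum>v\<in>UNIV. x u v * D v / vsum x v))"
    by (simp add: R_def right_diff_distrib sum_subtractf sum_distrib_left mult.assoc)
  also have "(\<Sum>u\<in>UNIV. \<Sum>v\<in>UNIV. I u v) = 2"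
    using dsum[OF knl] sumD[OF knl] by (simp add: I_def)
  also have "(\<Sum>u\<in>UNIV. \<Sum>v\<in>UNIV. x u v * D u / vsum x u) = (\<Sum>u\<in>UNIV. D u)"
  proof (rule sum.cong)
    fix u
    have "(\<Sum>v\<in>UNIV. x u v * D u / vsum x u) = D u / vsum x u * vsum x u"
      by (simp add: vsum_def sum_divide_distrib[symmetric] sum_distrib_right[symmetric])
    also have "\<dots> = D u"
      using xpos_vs[OF kl] by (auto simp: D_def)
    finally show "(\<Sum>v\<in>UNIV. x u v * D u / vsum x u) = D u" .
  qed simp
  also have "(\<Sum>u\<in>UNIV. \<Sum>v\<in>UNIV. x u v * D v / vsum x v) = (\<Sum>v\<in>UNIV. D v)"
  proof -
    have "(\<Sum>u\<in>UNIV. \<Sum>v\<in>UNIV. x u v * D v / vsum x v) = (\<Sum>v\<in>UNIV. \<Sum>u\<in>UNIV. x v u * D v / vsum x v)"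
      by (subst sum.swap) (simp add: xsym)
    also have "\<dots> = (\<Sum>v\<in>UNIV. D v)"
    proof (rule sum.cong)
      fix u
      have "(\<Sum>v\<in>UNIV. x u v * D u / vsum x u) = D u / vsum x u * vsum x u"
        by (simp add: vsum_def sum_divide_distrib[symmetric] sum_distrib_right[symmetric])
      also have "\<dots> = D u"
        using xpos_vs[OF kl] by (auto simp: D_def)
      finally show "(\<Sum>v\<in>UNIV. x u v * D u / vsum x u) = D u" .
    qed simp
    finally show ?thesis .
  qed
  also have "(\<Sum>v\<in>UNIV. D v) = 2" using sumD[OF knl] by (simp add: D_def)
  finally show ?thesis by (simp add: I_def D_def C_def)
qed


lemma jac_pos:
  fixes i j k l :: 'v
  assumes ij: "x i j > 0" and kl: "x k l > 0"
  shows "deriv (\<lambda>t. Fs a p (pert x {k,l} t) i j) 0 = H * ((if {i,j}={k,l} then 1 else 0) - x i j * ((if i = k \<or> i = l then 1 else 0) / vsum x i + (if j = k \<or> j = l then 1 else 0) / vsum x j))"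
proof -
  define I where "I u v = (if {u,v}={k,l} then 1 else (0::real))" for u v
  define D where "D u = (if u = k \<or> u = l then 1 else (0::real))" for u
  define C where "C = {(u,v). a u v * p u v > 0}"
  have knl: "k \<noteq> l" using x_neq kl by blast
  have vp: "vsum (pert x {k,l} t) u = vsum x u + t * D u" for t u
    using vsum_pert[OF knl] by (simp add: D_def)
  have pp: "pert x {k,l} t u v = x u v + t * I u v" for t u v
    by (simp add: pert_eq I_def)
  have cij: "a i j * p i j > 0" and eij: "a i j * p i j * x i j = H * vsum x i * vsum x j"
    using equil[OF ij] by auto
  have vi: "vsum x i > 0" and vj: "vsum x j > 0" using xpos_vs[OF ij] by auto
  define g where "g t = a i j * p i j * ((x i j + t * I i j)/((vsum x i + t * D i) * (vsum x j + t * D j)))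
      - (\<Sum>(u,v)\<in>C. a u v * p u v * ((x u v + t * I u v)^2/((vsum x u + t * D u) * (vsum x v + t * D v))))" for t
  have Feq: "Fs a p (pert x {k,l} t) i j = (x i j + t * I i j) * g t" for t
    unfolding Fs_def yf_def Hs_def g_def C_def using cij by (simp add: pp vp)
  define Y' where "Y' = a i j * p i j * ((I i j * (vsum x i * vsum x j) - x i j * (D i * vsum x j + vsum x i * D j))/(vsum x i * vsum x j)^2)"
  define S' where "S' = (\<Sum>(u,v)\<in>C. a u v * p u v * ((2 * x u v * I u v * (vsum x u * vsum x v) - (x u v)^2 * (D u * vsum x v + vsum x u * D v))/(vsum x u * vsum x v)^2))"
  have dg: "(g has_real_derivative (Y' - S')) (at 0)"
    unfolding g_def Y'_def S'_def
  proof (intro DERIV_diff DERIV_cmult DERIV_sum)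
    show "((\<lambda>t. (x i j + t * I i j) / ((vsum x i + t * D i) * (vsum x j + t * D j))) has_real_derivative
        (I i j * (vsum x i * vsum x j) - x i j * (D i * vsum x j + vsum x i * D j)) / (vsum x i * vsum x j)\<^sup>2) (at 0)"
      using vi vj by (intro dq1) auto
    fix n assume "n \<in> C"
    then obtain u v where n: "n = (u,v)" and c: "a u v * p u v > 0" by (auto simp: C_def)
    have vu: "vsum x u > 0" and vv: "vsum x v > 0" using cpos_vs[OF c] cpos_vs2[OF c] by auto
    have "((\<lambda>t. (x u v + t * I u v)^2/((vsum x u + t * D u) * (vsum x v + t * D v))) has_real_derivative
        (2 * x u v * I u v * (vsum x u * vsum x v) - (x u v)^2 * (D u * vsum x v + vsum x u * D v))/(vsum x u * vsum x v)^2) (at 0)"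
      using vu vv by (intro dq2) auto
    then show "((\<lambda>t. case n of (u, v) \<Rightarrow> a u v * p u v * ((x u v + t * I u v)\<^sup>2 / ((vsum x u + t * D u) * (vsum x v + t * D v))))
        has_real_derivative (case n of (u, v) \<Rightarrow> a u v * p u v * ((2 * x u v * I u v * (vsum x u * vsum x v) - (x u v)\<^sup>2 * (D u * vsum x v + vsum x u * D v)) / (vsum x u * vsum x v)\<^sup>2))) (at 0)"
      unfolding n prod.case by (rule DERIV_cmult)
  qed
  have dF: "((\<lambda>t. (x i j + t * I i j) * g t) has_real_derivative (I i j * g 0 + (x i j + 0 * I i j) * (Y' - S'))) (at 0)"
  proof -
    have "((\<lambda>t. x i j + t * I i j) has_real_derivative (0 + (1 * I i j))) (at 0)"
      by (intro derivative_eq_intros) auto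
    from DERIV_mult[OF this dg] show ?thesis by (simp add: mult.commute)
  qed
  have g0: "g 0 = 0"
  proof -
    have "a i j * p i j * ((x i j)/((vsum x i) * (vsum x j))) = H"
      using eij vi vj by (simp add: field_simps)
    moreover have "(\<Sum>(u,v)\<in>C. a u v * p u v * ((x u v)^2/((vsum x u) * (vsum x v)))) = H"
      using Hs_eq by (simp add: Hs_def C_def)
    ultimately show ?thesis by (simp add: g_def)
  qed
  have S0: "S' = 0" unfolding S'_def C_def I_def D_def by (rule hs_deriv0[OF kl])
  have "deriv (\<lambda>t. Fs a p (pert x {k,l} t) i j) 0 = x i j * Y'"
    using DERIV_imp_deriv[OF dF] g0 S0 by (simp add: Feq)
  also have "\<dots> = (a i j * p i j * x i j) * ((I i j * (vsum x i * vsum x j) - x i j * (D i * vsum x j + vsum x i * D j))/(vsum x i * vsum x j)^2)"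
    by (simp add: Y'_def)
  also have "\<dots> = H * (I i j - x i j * (D i / vsum x i + D j / vsum x j))"
    unfolding eij using vi vj by (simp add: field_simps power2_eq_square)
  finally show ?thesis by (simp add: I_def D_def)
qed

lemma jac_zero:
  assumes "x i j = 0" "{i,j} \<noteq> f"
  shows "deriv (\<lambda>t. Fs a p (pert x f t) i j) 0 = 0"
proof -
  have "(\<lambda>t. Fs a p (pert x f t) i j) = (\<lambda>t. 0)"
    using assms by (auto simp: Fs_def pert_eq)
  then show ?thesis by simp
qed


definition SE :: "'v set set" where "SE = {{u,w} | u w. x u w > 0}"
definition xE :: "'v set \<Rightarrow> real" where "xE e = x (fst (edge_rep adj e)) (snd (edge_rep adj e))"
definition sv :: "real^('v set) \<Rightarrow> 'v \<Rightarrow> real" where "sv y u = (\<Sum>w\<in>{w. x u w > 0}. y $ {u,w})"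
definition Qf :: "real^('v set) \<Rightarrow> real" where "Qf y = (\<Sum>u\<in>UNIV. (sv y u)^2 / vsum x u)"
definition Pf :: "real^('v set) \<Rightarrow> real" where "Pf y = (\<Sum>e\<in>SE. (y $ e)^2 / xE e)"
definition TT :: "(real^('v set)) set" where "TT = {y. Pf y = 1 \<and> (\<forall>e. e \<notin> SE \<longrightarrow> y $ e = 0)}"
definition dl :: "'v set \<Rightarrow> real^('v set)" where "dl f = (\<chi> g. if g = f then 1 else 0)"

lemma edge_rep_ok:
  assumes "adj u w" "edge_rep adj {u,w} = (i,j)"
  shows "adj i j \<and> {u,w} = {i,j}"
proof -
  have ex: "\<exists>q. (case q of (i,j) \<Rightarrow> adj i j \<and> {u,w} = {i,j})" using assms(1) by auto
  have "(case edge_rep adj {u,w} of (i,j) \<Rightarrow> adj i j \<and> {u,w} = {i,j})"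
    unfolding edge_rep_def by (rule someI_ex[OF ex])
  then show ?thesis using assms(2) by simp
qed

lemma xpos_adj: "x u w > 0 \<Longrightarrow> adj u w" using xadj by force

lemma xE_val: "x u w > 0 \<Longrightarrow> xE {u,w} = x u w"
proof -
  assume h: "x u w > 0"
  obtain i j where r: "edge_rep adj {u,w} = (i,j)" by (cases "edge_rep adj {u,w}") auto
  from edge_rep_ok[OF xpos_adj[OF h] r] have "{u,w} = {i,j}" by auto
  then have "x i j = x u w" using xsym by (auto simp: doubleton_eq_iff)
  then show ?thesis by (simp add: xE_def r)
qed

lemma SE_iff: "{u,w} \<in> SE \<longleftrightarrow> x u w > 0"
proof
  assume "{u,w} \<in> SE"
  then obtain u' w' where "{u,w} = {u',w'}" "x u' w' > 0" by (auto simp: SE_def)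
  then show "x u w > 0" using xsym by (auto simp: doubleton_eq_iff)
qed (auto simp: SE_def)

lemma SE_elim: "e \<in> SE \<Longrightarrow> (\<And>u w. e = {u,w} \<Longrightarrow> x u w > 0 \<Longrightarrow> P) \<Longrightarrow> P"
  by (auto simp: SE_def)

lemma SE_pos: "e \<in> SE \<Longrightarrow> xE e > 0"
  by (erule SE_elim) (simp add: xE_val)

lemma SE_edges: "SE \<subseteq> edges adj"
  by (auto simp: SE_def edges_def intro: xpos_adj)

lemma sv_delta:
  assumes ij: "x i j > 0"
  shows "sv (dl {i,j}) u = (if u = i \<or> u = j then 1 else 0)"
proof -
  have inj: "i \<noteq> j" using x_neq ij by blast
  have "sv (dl {i,j}) u = (\<Sum>w\<in>{w. x u w > 0}. if {u,w} = {i,j} then 1 else 0)"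
    by (simp add: sv_def dl_def)
  also have "\<dots> = (\<Sum>w\<in>UNIV. if {u,w} = {i,j} then 1 else 0)"
    by (rule sum.mono_neutral_left) (auto dest: Ival[OF ij])
  also have "\<dots> = (if u = i \<or> u = j then 1 else 0)" by (rule dsum[OF inj])
  finally show ?thesis .
qed

lemma sv_lin: "sv (y + t *\<^sub>R z) u = sv y u + t * sv z u"
  by (simp add: sv_def sum.distrib sum_distrib_left)

lemma sv_scale: "sv (t *\<^sub>R z) u = t * sv z u"
  by (simp add: sv_def sum_distrib_left)

lemma Qf_scale: "Qf (t *\<^sub>R z) = t^2 * Qf z"
  by (simp add: Qf_def sv_scale sum_distrib_left power_mult_distrib)

lemma Pf_scale: "Pf (t *\<^sub>R z) = t^2 * Pf z"
  by (simp add: Pf_def sum_distrib_left power_mult_distrib)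

lemma Qf_nonneg: "Qf y \<ge> 0"
  unfolding Qf_def
  by (rule sum_nonneg) (metis vsum_def xnn sum_nonneg divide_nonneg_nonneg zero_le_power2)

lemma Pf_nonneg: "Pf y \<ge> 0"
  unfolding Pf_def
  by (rule sum_nonneg) (metis SE_pos less_imp_le divide_nonneg_nonneg zero_le_power2)

lemma Qf_exp: "Qf (y + t *\<^sub>R z) = Qf y + t * (2 * (\<Sum>u\<in>UNIV. sv y u * sv z u / vsum x u)) + t^2 * Qf z"
proof -
  have "(sv (y + t *\<^sub>R z) u)^2 / vsum x u = (sv y u)^2 / vsum x u + t * (2 * (sv y u * sv z u / vsum x u)) + t^2 * ((sv z u)^2 / vsum x u)" for u
    by (simp add: sv_lin power2_eq_square add_divide_distrib algebra_simps)
  then show ?thesis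
    by (simp add: Qf_def sum.distrib sum_distrib_left)
qed

lemma Pf_exp:
  assumes e: "e \<in> SE"
  shows "Pf (y + t *\<^sub>R dl e) = Pf y + t * (2 * (y $ e / xE e)) + t^2 * (1 / xE e)"
proof -
  have "((y + t *\<^sub>R dl e) $ f)^2 / xE f = (y $ f)^2 / xE f + t * (2 * (if f = e then y $ e / xE e else 0)) + t^2 * (if f = e then 1 / xE e else 0)" for f
    by (simp add: dl_def power2_eq_square add_divide_distrib algebra_simps)
  then show ?thesis
    using e by (simp add: Pf_def sum.distrib sum_distrib_left[symmetric])
qed

lemma lin2:
  fixes A C q :: real
  assumes h: "2 * A - q * (2 * C) = 0"
  shows "A = q * C"
proof -
  have "2 * (A - q * C) = 0" using h by (simp add: right_diff_distrib mult.left_commute)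
  then show ?thesis by simp
qed

lemma quad0:
  fixes A B :: real
  assumes "\<And>t. t * A + t^2 * B \<ge> 0"
  shows "A = 0"
proof (rule ccontr)
  assume A: "A \<noteq> 0"
  define t where "t = - A / (\<bar>B\<bar> + 1)"
  have pos: "\<bar>B\<bar> + 1 > 0" by simp
  have "t * A + t^2 * B \<le> t * A + t^2 * \<bar>B\<bar>"
    by (simp add: mult_left_mono)
  also have "\<dots> = (- (A^2)) / (\<bar>B\<bar> + 1) + A^2 * \<bar>B\<bar> / (\<bar>B\<bar> + 1)^2"
    by (simp add: t_def power2_eq_square field_simps)
  also have "\<dots> < 0"
  proof -
    have e: "A^2 * \<bar>B\<bar> / (\<bar>B\<bar> + 1)^2 = (A^2 / (\<bar>B\<bar> + 1)) * (\<bar>B\<bar> / (\<bar>B\<bar> + 1))"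
      by (simp add: power2_eq_square)
    have l1: "\<bar>B\<bar> / (\<bar>B\<bar> + 1) < 1" by simp
    have p: "A^2 / (\<bar>B\<bar> + 1) > 0" using A pos by simp
    have "A^2 * \<bar>B\<bar> / (\<bar>B\<bar> + 1)^2 < A^2 / (\<bar>B\<bar> + 1)"
      unfolding e using mult_strict_left_mono[OF l1 p] by simp
    then show ?thesis by simp
  qed
  finally show False using assms[of t] by simp
qed


lemma cont_nth: "continuous_on UNIV (\<lambda>y::real^('v set). y $ e)"
  by (simp add: linear_continuous_on bounded_linear_vec_nth)

lemma Pf_cont: "continuous_on A Pf"
proof -
  have "Pf = (\<lambda>y. \<Sum>e\<in>SE. (1 / xE e) * (y $ e)^2)" by (auto simp: Pf_def fun_eq_iff)
  moreover have "continuous_on A (\<lambda>y::real^('v set). \<Sum>e\<in>SE. (1 / xE e) * (y $ e)^2)"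
    by (intro continuous_intros continuous_on_subset[OF cont_nth]) auto
  ultimately show ?thesis by simp
qed

lemma Qf_cont: "continuous_on A Qf"
proof -
  have "Qf = (\<lambda>y. \<Sum>u\<in>UNIV. (1 / vsum x u) * (\<Sum>w\<in>{w. x u w > 0}. y $ {u,w})^2)"
    by (auto simp: Qf_def sv_def fun_eq_iff)
  moreover have "continuous_on A (\<lambda>y::real^('v set). \<Sum>u\<in>UNIV. (1 / vsum x u) * (\<Sum>w\<in>{w. x u w > 0}. y $ {u,w})^2)"
    by (intro continuous_intros continuous_on_subset[OF cont_nth]) auto
  ultimately show ?thesis by simp
qed

lemma abs_le_sq: "\<bar>r::real\<bar> \<le> 1 + r^2"
proof (cases "\<bar>r\<bar> \<le> 1")
  case False
  then have "1 \<le> \<bar>r\<bar>" by simp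
  then have "\<bar>r\<bar> * 1 \<le> \<bar>r\<bar> * \<bar>r\<bar>" by (rule mult_left_mono) simp
  then have "\<bar>r\<bar> \<le> \<bar>r\<bar> * \<bar>r\<bar>" by simp
  then show ?thesis using abs_mult_self_eq[of r] by (simp add: power2_eq_square)
qed (simp add: add_increasing2)

lemma TT_compact: "compact TT"
proof -
  have c1: "closed {y::real^('v set). Pf y = 1}"
    by (rule closed_Collect_eq) (auto intro: Pf_cont)
  have c2: "closed {y::real^('v set). \<forall>e. e \<notin> SE \<longrightarrow> y $ e = 0}"
  proof (rule closed_Collect_all)
    fix e
    show "closed {y::real^('v set). e \<notin> SE \<longrightarrow> y $ e = 0}"
    proof (cases "e \<in> SE")
      case False
      then have "{y::real^('v set). e \<notin> SE \<longrightarrow> y $ e = 0} = {y. y $ e = 0}" by auto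
      moreover have "closed {y::real^('v set). y $ e = 0}"
        by (rule closed_Collect_eq) (auto intro: cont_nth)
      ultimately show ?thesis by simp
    qed simp
  qed
  have cl: "closed TT"
  proof -
    have "TT = {y. Pf y = 1} \<inter> {y. \<forall>e. e \<notin> SE \<longrightarrow> y $ e = 0}" by (auto simp: TT_def)
    then show ?thesis using c1 c2 by (simp add: closed_Int)
  qed
  have bd: "bounded TT"
    unfolding bounded_iff
  proof (intro exI ballI)
    fix y assume y: "y \<in> TT"
    have comp: "\<bar>y $ e\<bar> \<le> 1 + \<bar>xE e\<bar>" for e
    proof (cases "e \<in> SE")
      case True
      have "(y $ e)^2 / xE e \<le> Pf y"
        unfolding Pf_def
        by (rule member_le_sum[OF True]) (auto intro!: divide_nonneg_nonneg dest: SE_pos)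
      then have "(y $ e)^2 / xE e \<le> 1" using y by (simp add: TT_def)
      then have "(y $ e)^2 \<le> xE e" using SE_pos[OF True] by (simp add: divide_le_eq)
      then show ?thesis using abs_le_sq[of "y $ e"] by simp
    next
      case False
      then show ?thesis using y by (simp add: TT_def)
    qed
    have "norm y \<le> (\<Sum>e\<in>UNIV. \<bar>y $ e\<bar>)" by (rule norm_le_l1_cart)
    also have "\<dots> \<le> (\<Sum>e\<in>UNIV. 1 + \<bar>xE e\<bar>)" by (rule sum_mono) (rule comp)
    finally show "norm y \<le> (\<Sum>e\<in>UNIV. 1 + \<bar>xE e\<bar>)" .
  qed
  show ?thesis using cl bd by (simp add: compact_eq_bounded_closed)
qed


lemma sumsv:
  assumes supp: "\<And>e. e \<notin> SE \<Longrightarrow> y $ e = 0"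
  shows "(\<Sum>f\<in>SE. sv (dl f) t * y $ f) = sv y t"
proof -
  have "(\<Sum>f\<in>SE. sv (dl f) t * y $ f) = (\<Sum>f\<in>SE. \<Sum>w\<in>{w. x t w > 0}. (if {t,w} = f then y $ f else 0))"
    unfolding sv_def dl_def sum_distrib_right by (auto intro!: sum.cong)
  also have "\<dots> = (\<Sum>w\<in>{w. x t w > 0}. \<Sum>f\<in>SE. (if {t,w} = f then y $ f else 0))"
    by (rule sum.swap)
  also have "\<dots> = (\<Sum>w\<in>{w. x t w > 0}. y $ {t,w})"
    by (rule sum.cong) (auto simp: SE_iff)
  finally show ?thesis by (simp add: sv_def)
qed

lemma no_triple:
  assumes stab: "\<And>\<mu>. is_eigenvalue (edges adj) (Jac adj a p x) \<mu> \<Longrightarrow> Re \<mu> \<le> 0"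
    and h1: "x u w1 > 0" and h2: "x u w2 > 0" and w12: "w1 \<noteq> w2"
  shows "vsum x w1 \<le> x u w1"
proof (rule ccontr)
  assume "\<not> ?thesis"
  then have lt: "x u w1 < vsum x w1" by simp
  have uw1: "u \<noteq> w1" and uw2: "u \<noteq> w2" using x_neq h1 h2 by auto
  define E1 where "E1 = {u,w1}"
  define E2 where "E2 = {u,w2}"
  have E1S: "E1 \<in> SE" and E2S: "E2 \<in> SE" using h1 h2 by (auto simp: E1_def E2_def SE_iff)
  have E12: "E1 \<noteq> E2" using w12 uw1 uw2 by (auto simp: doubleton_eq_iff E1_def E2_def)
  define z where "z = dl E1 + (-1) *\<^sub>R dl E2"
  have svz: "sv z t = (if t = w1 then 1 else 0) - (if t = w2 then 1 else 0)" for t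
    unfolding z_def sv_lin E1_def E2_def sv_delta[OF h1] sv_delta[OF h2] using uw1 uw2 w12 by auto
  have Qz: "Qf z = 1 / vsum x w1 + 1 / vsum x w2"
  proof -
    have "(sv z t)^2 / vsum x t = (if t = w1 then 1 / vsum x w1 else 0) + (if t = w2 then 1 / vsum x w2 else 0)" for t
      using w12 by (simp add: svz)
    then show ?thesis by (simp add: Qf_def sum.distrib)
  qed
  have zval: "z $ e = (if e = E1 then 1 else 0) - (if e = E2 then 1 else 0)" for e
    by (simp add: z_def dl_def)
  have Pz: "Pf z = 1 / x u w1 + 1 / x u w2"
  proof -
    have "(z $ e)^2 / xE e = (if e = E1 then 1 / xE E1 else 0) + (if e = E2 then 1 / xE E2 else 0)" for e
      using E12 by (simp add: zval)
    then have "Pf z = 1 / xE E1 + 1 / xE E2" using E1S E2S by (simp add: Pf_def sum.distrib)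
    then show ?thesis using xE_val[OF h1] xE_val[OF h2] by (simp add: E1_def E2_def)
  qed
  have vw1: "vsum x w1 > 0" using xpos_vs[OF h1] by auto
  have vw2: "vsum x w2 \<ge> x u w2" using vsum_ge[of w2 u] xsym[of u w2] by simp
  have Qlt: "Qf z < Pf z"
  proof -
    have "1 / vsum x w1 < 1 / x u w1" using lt h1 by (simp add: frac_less2)
    moreover have "1 / vsum x w2 \<le> 1 / x u w2" using vw2 h2 by (simp add: frac_le)
    ultimately show ?thesis unfolding Qz Pz by simp
  qed
  have Pzpos: "Pf z > 0" unfolding Pz using h1 h2 by (intro add_pos_pos divide_pos_pos) auto
  define z' where "z' = (1 / sqrt (Pf z)) *\<^sub>R z"
  have Pz': "Pf z' = 1" unfolding z'_def Pf_scale using Pzpos by (simp add: power_divide)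
  have Qz': "Qf z' = Qf z / Pf z" unfolding z'_def Qf_scale using Pzpos by (simp add: power_divide)
  have z'T: "z' \<in> TT"
    unfolding TT_def using Pz' E1S E2S by (auto simp: z'_def zval)
  have Qz'1: "Qf z' < 1" unfolding Qz' using Qlt Pzpos by simp
  obtain y0 where y0T: "y0 \<in> TT" and y0min: "\<And>y. y \<in> TT \<Longrightarrow> Qf y0 \<le> Qf y"
    using continuous_attains_inf[OF TT_compact _ Qf_cont] z'T by blast
  define q where "q = Qf y0"
  have q1: "q < 1" using y0min[OF z'T] Qz'1 by (simp add: q_def)
  have Py0: "Pf y0 = 1" and supp: "\<And>e. e \<notin> SE \<Longrightarrow> y0 $ e = 0" using y0T by (auto simp: TT_def)
  have ineq: "Qf y \<ge> q * Pf y" if ys: "\<forall>e. e \<notin> SE \<longrightarrow> y $ e = 0" for y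
  proof (cases "Pf y = 0")
    case True then show ?thesis using Qf_nonneg[of y] by simp
  next
    case False
    then have Pp: "Pf y > 0" using Pf_nonneg[of y] by simp
    define y' where "y' = (1 / sqrt (Pf y)) *\<^sub>R y"
    have "Pf y' = 1" unfolding y'_def Pf_scale using Pp by (simp add: power_divide)
    then have "y' \<in> TT" using ys by (auto simp: TT_def y'_def)
    then have "q \<le> Qf y'" using y0min by (simp add: q_def)
    also have "Qf y' = Qf y / Pf y" unfolding y'_def Qf_scale using Pp by (simp add: power_divide)
    finally show ?thesis using Pp by (simp add: pos_le_divide_eq mult.commute)
  qed
  have foc: "sv y0 i / vsum x i + sv y0 j / vsum x j = q * y0 $ {i,j} / x i j" if ij: "x i j > 0" for i j
  proof -
    define e where "e = {i,j}"
    have eS: "e \<in> SE" using ij by (simp add: e_def SE_iff)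
    have inj: "i \<noteq> j" using x_neq ij by auto
    define A where "A = 2 * (\<Sum>u\<in>UNIV. sv y0 u * sv (dl e) u / vsum x u) - q * (2 * (y0 $ e / xE e))"
    define B where "B = Qf (dl e) - q * (1 / xE e)"
    have "t * A + t^2 * B \<ge> 0" for t
    proof -
      have "\<forall>f. f \<notin> SE \<longrightarrow> (y0 + t *\<^sub>R dl e) $ f = 0" using supp eS by (auto simp: dl_def)
      from ineq[OF this] have "q * Pf (y0 + t *\<^sub>R dl e) \<le> Qf (y0 + t *\<^sub>R dl e)" .
      then show ?thesis unfolding Qf_exp Pf_exp[OF eS] Py0 A_def B_def q_def[symmetric]
        by (simp add: algebra_simps)
    qed
    then have A0: "A = 0" by (rule quad0)
    have "(\<Sum>u\<in>UNIV. sv y0 u * sv (dl e) u / vsum x u) = (\<Sum>u\<in>UNIV. (if u = i then sv y0 i / vsum x i else 0) + (if u = j then sv y0 j / vsum x j else 0))"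
      by (rule sum.cong) (auto simp: e_def sv_delta[OF ij] inj)
    also have "\<dots> = sv y0 i / vsum x i + sv y0 j / vsum x j" by (simp add: sum.distrib)
    finally have c: "(\<Sum>u\<in>UNIV. sv y0 u * sv (dl e) u / vsum x u) = sv y0 i / vsum x i + sv y0 j / vsum x j" .
    have "2 * (sv y0 i / vsum x i + sv y0 j / vsum x j) - q * (2 * (y0 $ e / x i j)) = 0"
      using A0 unfolding A_def c xE_val[OF ij, folded e_def] .
    then have "sv y0 i / vsum x i + sv y0 j / vsum x j = q * (y0 $ e / x i j)" by (rule lin2)
    then show ?thesis by (simp add: e_def)
  qed
  have Jrow: "(\<Sum>f\<in>edges adj. Jac adj a p x e f * y0 $ f) = H * (1 - q) * y0 $ e" if eE: "e \<in> edges adj" for e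
  proof -
    obtain u' w' where e: "e = {u',w'}" "adj u' w'" using eE by (auto simp: edges_def)
    obtain i j where r: "edge_rep adj e = (i,j)" by (cases "edge_rep adj e") auto
    have eij: "e = {i,j}" using edge_rep_ok[OF e(2)] r e(1) by auto
    have J: "Jac adj a p x e f = deriv (\<lambda>t. Fs a p (pert x f t) i j) 0" for f
      by (simp add: Jac_def r)
    have "(\<Sum>f\<in>edges adj. Jac adj a p x e f * y0 $ f) = (\<Sum>f\<in>SE. Jac adj a p x e f * y0 $ f)"
      by (rule sum.mono_neutral_right) (auto simp: SE_edges supp)
    also have "\<dots> = H * (1 - q) * y0 $ e"
    proof (cases "x i j > 0")
      case True
      have Jf: "Jac adj a p x e f * y0 $ f = H * (if e = f then y0 $ f else 0) - (H * x i j / vsum x i) * (sv (dl f) i * y0 $ f)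
          - (H * x i j / vsum x j) * (sv (dl f) j * y0 $ f)" if fS: "f \<in> SE" for f
      proof -
        obtain k l where f: "f = {k,l}" "x k l > 0" using fS by (auto simp: SE_def)
        have Jv: "Jac adj a p x e f = H * ((if e = f then 1 else 0) - x i j * ((if i = k \<or> i = l then 1 else 0) / vsum x i + (if j = k \<or> j = l then 1 else 0) / vsum x j))"
          using J[of f] jac_pos[OF True f(2)] by (simp add: f(1) eij)
        show ?thesis unfolding Jv unfolding f(1) sv_delta[OF f(2)]
          by (simp add: algebra_simps split: if_split)
      qed
      have "(\<Sum>f\<in>SE. Jac adj a p x e f * y0 $ f) = H * (\<Sum>f\<in>SE. (if e = f then y0 $ f else 0)) - (H * x i j / vsum x i) * (\<Sum>f\<in>SE. sv (dl f) i * y0 $ f)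
          - (H * x i j / vsum x j) * (\<Sum>f\<in>SE. sv (dl f) j * y0 $ f)"
      proof -
        have hd: "\<And>c r. H * (if c then r else 0) = (if c then H * r else 0)" by simp
        show ?thesis by (simp only: sum.cong[OF refl Jf] sum_subtractf sum_distrib_left)
      qed
      also have "\<dots> = H * y0 $ e - H * x i j * (sv y0 i / vsum x i + sv y0 j / vsum x j)"
      proof -
        have s1: "(\<Sum>f\<in>SE. sv (dl f) i * y0 $ f) = sv y0 i" by (rule sumsv[OF supp])
        have s2: "(\<Sum>f\<in>SE. sv (dl f) j * y0 $ f) = sv y0 j" by (rule sumsv[OF supp])
        have s3: "(\<Sum>f\<in>SE. (if e = f then y0 $ f else 0)) = y0 $ e" using True eij by (simp add: SE_iff)
        show ?thesis unfolding s1 s2 s3 by (simp add: algebra_simps)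
      qed
      also have "\<dots> = H * (1 - q) * y0 $ e"
        using foc[OF True] True eij by (simp add: algebra_simps)
      finally show ?thesis .
    next
      case False
      then have eS: "e \<notin> SE" using eij SE_iff by auto
      have "Jac adj a p x e f * y0 $ f = 0" if "f \<in> SE" for f
      proof -
        have "{i,j} \<noteq> f" using eS that eij by auto
        moreover have "x i j = 0" using False xnn[of i j] by auto
        ultimately show ?thesis by (simp add: J jac_zero)
      qed
      then have "(\<Sum>f\<in>SE. Jac adj a p x e f * y0 $ f) = 0" by (intro sum.neutral) blast
      then show ?thesis using supp[OF eS] by simp
    qed
    finally show ?thesis .
  qed
  have ev: "is_eigenvalue (edges adj) (Jac adj a p x) (complex_of_real (H * (1 - q)))"
    unfolding is_eigenvalue_def
  proof (intro exI conjI ballI)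
    show "\<exists>e\<in>edges adj. complex_of_real (y0 $ e) \<noteq> 0"
    proof (rule ccontr)
      assume "\<not> ?thesis"
      then have "\<forall>e\<in>SE. y0 $ e = 0" using SE_edges by auto
      then have "Pf y0 = 0" by (simp add: Pf_def)
      then show False using Py0 by simp
    qed
    fix e assume eE: "e \<in> edges adj"
    have "complex_of_real (\<Sum>f\<in>edges adj. Jac adj a p x e f * y0 $ f) = complex_of_real (H * (1 - q) * y0 $ e)"
      using Jrow[OF eE] by simp
    then show "(\<Sum>f\<in>edges adj. complex_of_real (Jac adj a p x e f) * complex_of_real (y0 $ f)) =
        complex_of_real (H * (1 - q)) * complex_of_real (y0 $ e)"
      by (simp add: of_real_sum)
  qed
  from stab[OF ev] have "H * (1 - q) \<le> 0" by simp
  moreover have "H * (1 - q) > 0" using Hpos q1 by simp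
  ultimately show False by simp
qed


lemma adj_same:
  assumes stab: "\<And>\<mu>. is_eigenvalue (edges adj) (Jac adj a p x) \<mu> \<Longrightarrow> Re \<mu> \<le> 0"
    and h1: "x i j > 0" and h2: "x j l > 0"
  shows "a i j * p i j = a j l * p j l"
proof (cases "i = l")
  case True then show ?thesis using csym by simp
next
  case False
  have h1': "x j i > 0" using h1 xsym by simp
  have "vsum x i \<le> x j i" by (rule no_triple[OF stab h1' h2 False])
  then have vi: "vsum x i = x j i" using vsum_ge[of i j] xsym[of i j] by simp
  have "vsum x l \<le> x j l" by (rule no_triple[OF stab h2 h1']) (use False in auto)
  then have vl: "vsum x l = x j l" using vsum_ge[of l j] xsym[of l j] by simp
  have e1: "a j i * p j i * x j i = H * vsum x j * x j i" using equil[OF h1'] vi by simp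
  have e2: "a j l * p j l * x j l = H * vsum x j * x j l" using equil[OF h2] vl by simp
  have c1: "a j i * p j i = H * vsum x j" using e1 h1' by simp
  have c2: "a j l * p j l = H * vsum x j" using e2 h2 by simp
  show ?thesis using c1 c2 csym[of i j] by simp
qed

lemma conn_claim:
  assumes stab: "\<And>\<mu>. is_eigenvalue (edges adj) (Jac adj a p x) \<mu> \<Longrightarrow> Re \<mu> \<le> 0"
    and conn: "Gx_conn x j k" and ij: "x i j > 0"
  shows "x k l > 0 \<Longrightarrow> a i j * p i j = a k l * p k l"
  using conn unfolding Gx_conn_def
proof (induction arbitrary: l rule: rtranclp_induct)
  case base
  then show ?case using adj_same[OF stab ij] by simp
next
  case (step m k)
  have "a i j * p i j = a m k * p m k" using step.IH step.hyps(2) by simp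
  also have "\<dots> = a k l * p k l" using adj_same[OF stab step.hyps(2) step.prems] .
  finally show ?case .
qed

end


theorem lemma10:
  fixes adj :: "'v::finite \<Rightarrow> 'v \<Rightarrow> bool"
    and a p x :: "'v \<Rightarrow> 'v \<Rightarrow> real" and h1 :: real
  assumes adj_sym: "\<And>i j. adj i j \<Longrightarrow> adj j i"
    and adj_irrefl: "\<And>i. \<not> adj i i"
    and a_sym: "\<And>i j. a i j = a j i" and a_nonneg: "\<And>i j. a i j \<ge> 0"
    and a_adj: "\<And>i j. a i j > 0 \<Longrightarrow> adj i j"
    and p_sym: "\<And>i j. p i j = p j i" and p_range: "\<And>i j. 0 \<le> p i j \<and> p i j \<le> 1"
    and p_adj: "\<And>i j. \<not> adj i j \<Longrightarrow> p i j = 0"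
    and ap_pos: "\<exists>i j. a i j * p i j > 0"
    and h1: "0 < h1" "h1 \<le> 1"
    and stable: "in_Gammas adj a p h1 x"
  shows "\<forall>i j k l. Gx_conn x i j \<and> Gx_conn x i k \<and> Gx_conn x i l \<and> x i j > 0 \<and> x k l > 0
           \<longrightarrow> a i j * p i j = a k l * p k l"
proof -
  have G0: "in_Gamma0 adj a p h1 x" and stab: "\<And>\<mu>. is_eigenvalue (edges adj) (Jac adj a p x) \<mu> \<Longrightarrow> Re \<mu> \<le> 0"
    using stable by (auto simp: in_Gammas_def)
  have D: "in_Delta adj a p h1 x" and F0: "\<And>i j. Ff a p x i j = 0" and nb: "\<not> in_bdry adj a p h1 x"
    using G0 by (auto simp: in_Gamma0_def)
  have xsym: "\<And>i j. x i j = x j i" and xnn: "\<And>i j. x i j \<ge> 0" and xadj: "\<And>i j. \<not> adj i j \<Longrightarrow> x i j = 0"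
    and hsum: "(\<Sum>(i,j)\<in>{(i,j). a i j * p i j > 0}. x i j) \<ge> h1"
    using D by (auto simp: in_Delta_def)
  have cnn: "\<And>i j. a i j * p i j \<ge> 0" using a_nonneg p_range by (simp add: mult_nonneg_nonneg)
  have csym: "\<And>i j. a i j * p i j = a j i * p j i" using a_sym p_sym by simp
  have vge: "\<And>i j. x i j \<le> vsum x i"
    unfolding vsum_def by (rule member_le_sum) (auto simp: xnn)
  have cpos_vs: "vsum x i > 0" if c: "a i j * p i j > 0" for i j
  proof -
    have "a i j \<noteq> 0" using c by auto
    then have "a i j > 0" using a_nonneg[of i j] by simp
    then have aij: "adj i j" by (rule a_adj)
    have "(\<Sum>j\<in>{j. a i j * p i j > 0}. x i j) \<noteq> 0"
      using nb D aij c unfolding in_bdry_def by blast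
    moreover have "(\<Sum>j\<in>{j. a i j * p i j > 0}. x i j) \<ge> 0" by (rule sum_nonneg) (simp add: xnn)
    moreover have "(\<Sum>j\<in>{j. a i j * p i j > 0}. x i j) \<le> vsum x i"
      unfolding vsum_def by (rule sum_mono2) (auto simp: xnn)
    ultimately show ?thesis by linarith
  qed
  have yH: "yf a p x i j = Hf a p x" if "x i j > 0" for i j
    using F0[of i j] that by (simp add: Ff_def split: if_splits)
  have vpos: "vsum x i > 0 \<and> vsum x j > 0" if "x i j > 0" for i j
    using vge[of i j] vge[of j i] xsym[of i j] that by auto
  have Hpos: "Hf a p x > 0"
  proof -
    have "\<exists>q\<in>{(i,j). a i j * p i j > 0}. (case q of (i,j) \<Rightarrow> x i j) \<noteq> 0"
    proof (rule ccontr)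
      assume "\<not> ?thesis"
      then have "(\<Sum>(i,j)\<in>{(i,j). a i j * p i j > 0}. x i j) = 0" by (intro sum.neutral) auto
      then show False using hsum h1 by simp
    qed
    then obtain i j where c: "a i j * p i j > 0" and xij: "x i j \<noteq> 0" by auto
    then have xp: "x i j > 0" using xnn[of i j] by simp
    have ye: "yf a p x i j = a i j * p i j * x i j / (vsum x i * vsum x j)"
      unfolding yf_def using c by (subst if_not_P) auto
    have n: "a i j * p i j * x i j > 0" using c xp by (rule mult_pos_pos)
    have d: "vsum x i * vsum x j > 0" using vpos[OF xp] by (simp add: mult_pos_pos)
    have "yf a p x i j > 0" unfolding ye using n d by (rule divide_pos_pos)
    then show ?thesis using yH[OF xp] by simp
  qed
  have equil: "a i j * p i j > 0 \<and> a i j * p i j * x i j = Hf a p x * vsum x i * vsum x j" if xp: "x i j > 0" for i j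
  proof -
    have y: "yf a p x i j = Hf a p x" by (rule yH[OF xp])
    have c0: "a i j * p i j \<noteq> 0"
    proof
      assume "a i j * p i j = 0"
      then have "yf a p x i j = 0" by (simp add: yf_def)
      then show False using y Hpos by simp
    qed
    then have "a i j * p i j * x i j / (vsum x i * vsum x j) = Hf a p x" using y by (simp add: yf_def)
    then have "a i j * p i j * x i j = Hf a p x * (vsum x i * vsum x j)" using vpos[OF xp]
      by (simp add: divide_eq_eq)
    moreover have "a i j * p i j > 0" using c0 cnn[of i j] by (simp only: less_le) simp
    ultimately show ?thesis by (simp add: mult.assoc)
  qed
  interpret L adj a p x "Hf a p x"
    by unfold_locales (use xsym xnn xadj adj_irrefl csym cnn cpos_vs Hpos equil in auto)
  show ?thesis
  proof (intro allI impI)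
    fix i j k l
    assume h: "Gx_conn x i j \<and> Gx_conn x i k \<and> Gx_conn x i l \<and> x i j > 0 \<and> x k l > 0"
    have ji: "x j i > 0" using h xsym by simp
    have "a j i * p j i = a k l * p k l" by (rule conn_claim[OF stab _ ji]) (use h in auto)
    then show "a i j * p i j = a k l * p k l" using csym[of i j] by simp
  qed
qed

end
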